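(* Let $S$, $v$, $\hat S$ and $\mathrm{Lip}_a$ be as in the context. For every $f\in C^1(\mathbb R^2,\mathbb R)$, $$\mathrm{Lip}_a(f,x)\ge|P_{v(x)}\nabla f(x)|\qquad\text{for all }x\in\hat S.$$
   Context: Let $T_1=\begin{pmatrix}3/5&0\\0&1/5\end{pmatrix}$, $T_2=\begin{pmatrix}3/10&\sqrt3/10\\ \sqrt3/10&1/2\end{pmatrix}$, $T_3=\begin{pmatrix}3/10&-\sqrt3/10\\ -\sqrt3/10&1/2\end{pmatrix}$, $\bar A=(0,0)$, $\bar B=(1,1/\sqrt3)$, $\bar C=(1,-1/\sqrt3)$, $\psi_1(x)=\bar A+T_1(x-\bar A)$, $\psi_2(x)=\bar B+T_2(x-\bar B)$, $\psi_3(x)=\bar C+T_3(x-\bar C)$; the harmonic Sierpinski gasket $S$ is the unique nonempty compact set with $S=\bigcup_i\psi_i(S)$. Let $\Sigma=\{1,2,3\}^{\mathbb N}$, $\psi_{w_0\dots w_l}=\psi_{w_0}\circ\cdots\circ\psi_{w_l}$ (affine with constant derivative $D\psi_{w_0\dots w_l}$), and $\Phi:\Sigma\to S$, $\Phi(w)=$ the unique point of $\bigcap_l\psi_{w_0\dots w_l}(\triangle)$, $\triangle$ the closed triangle $\bar A\bar B\bar C$. Let $N=\{\psi_{w_0\dots w_l}(P): l\ge0,\ w\in\Sigma,\ P\in\{\bar A,\bar B,\bar C\}\}$ (countable; exactly the points with more than one coding). Kusuoka's measure: with $(\mathcal LA)(x)=\sum_i{}^tD\psi_iA_{\psi_i(x)}D\psi_i$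 on continuous symmetric-matrix fields, having simple positive eigenvalue $\beta$, let $\tau$ be the unique semipositive-definite symmetric-matrix-valued Borel measure on $S$ with $\mathrm{tr}\,\tau(S)=1$ and $\mathcal L^*\tau=\beta\tau$; $\tau(S)$ is a positive multiple of $Id$; $\kappa(E)=\mathrm{tr}\,\tau(E)$ is a non-atomic probability measure. For a unit vector $v$, $P_v$ is orthogonal projection onto $\mathbb Rv$; $\|A\|_{HS}^2=\mathrm{tr}({}^tAA)$. There is a Borel field of unit vectors $v$ with $\tau=P_{v(x)}\kappa$. Let $\tilde S$ be the set of $x=\Phi(w)$ at which $P_{v(x)}=\lim_{l\to\infty}D\psi_{w_0\dots w_{l-1}}{}^tD\psi_{w_0\dots w_{l-1}}/\|D\psi_{w_0\dots w_{l-1}}\|_{HS}^2$, and $\hat S=\tilde S\setminus N$ ($\kappa(\hat S)=1$). For $h:\mathbb R^2\to\mathbb R$ and $x\in S$, $\mathrm{Lip}_a(h,x)=\lim_{r\to0}\sup\{|h(y)-h(z)|/\|y-z\|: y\ne z,\ y,z\in S\cap B(x,r)\}$ (local Lipschitz constant computed on $S$). *)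

theory Defs
  imports "HOL-Analysis.Analysis"
begin

type_synonym pt = "real^2"
type_synonym mat2 = "real^2^2"

definition T1 :: mat2 where "T1 = vector [vector [3/5, 0], vector [0, 1/5]]"
definition T2 :: mat2 where
  "T2 = vector [vector [3/10, sqrt 3/10], vector [sqrt 3/10, 1/2]]"
definition T3 :: mat2 where
  "T3 = vector [vector [3/10, - sqrt 3/10], vector [- sqrt 3/10, 1/2]]"

definition pA :: pt where "pA = vector [0, 0]"
definition pB :: pt where "pB = vector [1, 1 / sqrt 3]"
definition pC :: pt where "pC = vector [1, - 1 / sqrt 3]"

definition Tm :: "nat \<Rightarrow> mat2" where
  "Tm i = (if i = 1 then T1 else if i = 2 then T2 else T3)"
definition fixpt :: "nat \<Rightarrow> pt" where
  "fixpt i = (if i = 1 then pA else if i = 2 then pB else pC)"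

definition psi :: "nat \<Rightarrow> pt \<Rightarrow> pt" where
  "psi i x = fixpt i + Tm i *v (x - fixpt i)"

definition HSG :: "pt set" where
  "HSG = (THE S. S \<noteq> {} \<and> compact S \<and> S = (\<Union>i\<in>{1,2,3::nat}. psi i ` S))"

definition Sigma3 :: "(nat \<Rightarrow> nat) set" where
  "Sigma3 = {w. \<forall>n. w n \<in> {1,2,3}}"

text \<open>psi_list [i0,...,il] = psi i0 o ... o psi il, with (constant) derivative
  Dpsi_list [i0,...,il] = T i0 ** ... ** T il.\<close>
fun psi_list :: "nat list \<Rightarrow> pt \<Rightarrow> pt" where
  "psi_list [] = id"
| "psi_list (i # is) = psi i \<circ> psi_list is"

fun Dpsi_list :: "nat list \<Rightarrow> mat2" where
  "Dpsi_list [] = mat 1"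
| "Dpsi_list (i # is) = Tm i ** Dpsi_list is"

definition triangle :: "pt set" where
  "triangle = convex hull {pA, pB, pC}"

definition Phi :: "(nat \<Rightarrow> nat) \<Rightarrow> pt" where
  "Phi w = (THE x. x \<in> (\<Inter>l. psi_list (map w [0..<Suc l]) ` triangle))"

definition Nset :: "pt set" where
  "Nset = {psi_list (map w [0..<Suc l]) P | l w P. w \<in> Sigma3 \<and> P \<in> {pA, pB, pC}}"

definition sym_mat :: "mat2 \<Rightarrow> bool" where
  "sym_mat M \<longleftrightarrow> transpose M = M"

definition psd_mat :: "mat2 \<Rightarrow> bool" where
  "psd_mat M \<longleftrightarrow> sym_mat M \<and> (\<forall>u. u \<bullet> (M *v u) \<ge> 0)"

definition sym_field :: "(pt \<Rightarrow> mat2) \<Rightarrow> bool" where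
  "sym_field A \<longleftrightarrow> continuous_on HSG A \<and> (\<forall>x\<in>HSG. sym_mat (A x))"

definition opL :: "(pt \<Rightarrow> mat2) \<Rightarrow> pt \<Rightarrow> mat2" where
  "opL A x = (\<Sum>i\<in>{1,2,3::nat}. transpose (Tm i) ** A (psi i x) ** Tm i)"

definition eigen_field :: "real \<Rightarrow> (pt \<Rightarrow> mat2) \<Rightarrow> bool" where
  "eigen_field b A \<longleftrightarrow> sym_field A \<and> (\<forall>x\<in>HSG. opL A x = b *\<^sub>R A x)"

definition simple_pos_eigenvalue :: "real \<Rightarrow> bool" where
  "simple_pos_eigenvalue b \<longleftrightarrow> b > 0 \<and>
     (\<exists>A. eigen_field b A \<and> (\<exists>x\<in>HSG. A x \<noteq> 0) \<and>
        (\<forall>B. eigen_field b B \<longrightarrow> (\<exists>c. \<forall>x\<in>HSG. B x = c *\<^sub>R A x)))"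

definition betaK :: real where
  "betaK = (THE b. simple_pos_eigenvalue b)"

definition borelS :: "pt set set" where
  "borelS = sets (restrict_space borel HSG)"

text \<open>Semipositive-definite symmetric-matrix-valued Borel measures on S
  (set functions on the Borel subsets of S, countably additive, zero elsewhere).\<close>
definition matrix_measure :: "(pt set \<Rightarrow> mat2) \<Rightarrow> bool" where
  "matrix_measure \<tau> \<longleftrightarrow>
     (\<forall>E\<in>borelS. psd_mat (\<tau> E)) \<and>
     (\<forall>E. E \<notin> borelS \<longrightarrow> \<tau> E = 0) \<and>
     (\<forall>F::nat \<Rightarrow> pt set. range F \<subseteq> borelS \<longrightarrow> disjoint_family F \<longrightarrow>
        (\<lambda>n. \<tau> (F n)) sums \<tau> (\<Union>n. F n))"

text \<open>The dual operator L* on matrix measures: for every continuous field A,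
  integral of tr(A d(L*tau)) = integral of tr((L A) d tau); unfolded this is
  (L* tau)(E) = sum_i T_i tau(psi_i^-1(E) \<inter> S) T_i^t.\<close>
definition opLdual :: "(pt set \<Rightarrow> mat2) \<Rightarrow> pt set \<Rightarrow> mat2" where
  "opLdual \<tau> E = (\<Sum>i\<in>{1,2,3::nat}. Tm i ** \<tau> (psi i -` E \<inter> HSG) ** transpose (Tm i))"

definition tauK :: "pt set \<Rightarrow> mat2" where
  "tauK = (THE \<tau>. matrix_measure \<tau> \<and> trace (\<tau> HSG) = 1 \<and>
                 (\<forall>E\<in>borelS. opLdual \<tau> E = betaK *\<^sub>R \<tau> E))"

definition kappaK :: "pt measure" where
  "kappaK = measure_of HSG borelS (\<lambda>E. ennreal (trace (tauK E)))"

definition projm :: "pt \<Rightarrow> mat2" where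
  "projm v = (\<chi> i j. v $ i * v $ j)"

definition HS_sq :: "mat2 \<Rightarrow> real" where
  "HS_sq A = trace (transpose A ** A)"

definition kusuoka_field :: "(pt \<Rightarrow> pt) \<Rightarrow> bool" where
  "kusuoka_field v \<longleftrightarrow> v \<in> borel_measurable (restrict_space borel HSG) \<and>
     (\<forall>x\<in>HSG. norm (v x) = 1) \<and>
     (\<forall>E\<in>borelS. tauK E = (\<chi> i j. set_lebesgue_integral kappaK E (\<lambda>x. projm (v x) $ i $ j)))"

definition S_tilde :: "(pt \<Rightarrow> pt) \<Rightarrow> pt set" where
  "S_tilde v = {x. \<exists>w\<in>Sigma3. x = Phi w \<and>
      (\<lambda>l. (1 / HS_sq (Dpsi_list (map w [0..<l]))) *\<^sub>R
            (Dpsi_list (map w [0..<l]) ** transpose (Dpsi_list (map w [0..<l]))))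
        \<longlonglongrightarrow> projm (v x)}"

definition S_hat :: "(pt \<Rightarrow> pt) \<Rightarrow> pt set" where
  "S_hat v = S_tilde v - Nset"

definition Lip_a :: "(pt \<Rightarrow> real) \<Rightarrow> pt \<Rightarrow> ereal" where
  "Lip_a h x = Lim (at_right (0::real)) (\<lambda>r.
     SUP (y, z) \<in> {(y, z). y \<noteq> z \<and> y \<in> HSG \<inter> ball x r \<and> z \<in> HSG \<inter> ball x r}.
        ereal (\<bar>h y - h z\<bar> / norm (y - z)))"

definition C1 :: "(pt \<Rightarrow> real) \<Rightarrow> bool" where
  "C1 f \<longleftrightarrow> (\<exists>f' :: pt \<Rightarrow> pt \<Rightarrow>\<^sub>L real.
     (\<forall>x. (f has_derivative blinfun_apply (f' x)) (at x)) \<and> continuous_on UNIV f')"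

definition grad :: "(pt \<Rightarrow> real) \<Rightarrow> pt \<Rightarrow> pt" where
  "grad f x = (\<chi> i. frechet_derivative f (at x) (axis i 1))"

end

theory Submission
  imports Defs
begin


lemma norm2_sq: "(norm (x::real^2))^2 = (x$1)^2 + (x$2)^2"
  by (simp add: norm_vec_def L2_set_def sum_2)

lemma inner2: "(x::real^2) \<bullet> y = x$1 * y$1 + x$2 * y$2"
  by (simp add: inner_vec_def sum_2)

lemma Tm_apply:
  "(T1 *v u) $ 1 = 3/5 * u$1" "(T1 *v u) $ 2 = 1/5 * u$2"
  "(T2 *v u) $ 1 = 3/10 * u$1 + sqrt 3/10 * u$2" "(T2 *v u) $ 2 = sqrt 3/10 * u$1 + 1/2 * u$2"
  "(T3 *v u) $ 1 = 3/10 * u$1 - sqrt 3/10 * u$2" "(T3 *v u) $ 2 = - sqrt 3/10 * u$1 + 1/2 * u$2"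
  by (simp_all add: T1_def T2_def T3_def matrix_vector_mult_def sum_2)

lemma mat_mult2: "((A::real^2^2) ** B) $ i $ j = A$i$1 * B$1$j + A$i$2 * B$2$j"
  by (simp add: matrix_matrix_mult_def sum_2)

lemma mv2: "((A::real^2^2) *v u) $ i = A$i$1 * u$1 + A$i$2 * u$2"
  by (simp add: matrix_vector_mult_def sum_2)

lemma aux_T2: "s * s = (3::real) \<Longrightarrow> (3/10*a + s/10*b)^2 + (s/10*a + 1/2*b)^2 = 9/25*(a^2+b^2) - 2/25*(s*a-b)^2"
proof -
  assume h: "s * s = 3"
  have "(3/10*a + s/10*b)^2 + (s/10*a + 1/2*b)^2 - (9/25*(a^2+b^2) - 2/25*(s*a-b)^2) = (s * s - 3) * (9*a^2+b^2)/100"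
    by (simp add: power2_eq_square field_simps) 
  then show ?thesis using h by simp
qed
lemma aux_T3: "s * s = (3::real) \<Longrightarrow> (3/10*a - s/10*b)^2 + (- s/10*a + 1/2*b)^2 = 9/25*(a^2+b^2) - 2/25*(s*a+b)^2"
proof -
  assume h: "s * s = 3"
  have "(3/10*a - s/10*b)^2 + (- s/10*a + 1/2*b)^2 - (9/25*(a^2+b^2) - 2/25*(s*a+b)^2) = (s * s - 3) * (9*a^2+b^2)/100"
    by (simp add: power2_eq_square field_simps) 
  then show ?thesis using h by simp
qed

lemma Tm_norm: "norm (Tm i *v u) \<le> 3/5 * norm u"
proof -
  have s3: "sqrt 3 * sqrt 3 = (3::real)" by simp
  have "(norm (Tm i *v u))^2 \<le> (3/5 * norm u)^2"
  proof -
    have "((Tm i *v u)$1)^2 + ((Tm i *v u)$2)^2 \<le> 9/25 * ((u$1)^2 + (u$2)^2)"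
    proof (cases "i = 1")
      case True then show ?thesis by (simp add: Tm_def Tm_apply power2_eq_square)
    next
      case False
      show ?thesis
      proof (cases "i = 2")
        case True
        have "((Tm i *v u)$1)^2 + ((Tm i *v u)$2)^2 = 9/25 * ((u$1)^2 + (u$2)^2) - 2/25 * (sqrt 3 * u$1 - u$2)^2"
          using True aux_T2[OF s3] by (simp add: Tm_def Tm_apply)
        moreover have "0 \<le> (sqrt 3 * u$1 - u$2)^2" by simp
        ultimately show ?thesis by linarith
      next
        case F2: False
        have "((Tm i *v u)$1)^2 + ((Tm i *v u)$2)^2 = 9/25 * ((u$1)^2 + (u$2)^2) - 2/25 * (sqrt 3 * u$1 + u$2)^2"
          using False F2 aux_T3[OF s3] by (simp add: Tm_def Tm_apply)
        moreover have "0 \<le> (sqrt 3 * u$1 + u$2)^2" by simp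
        ultimately show ?thesis by linarith
      qed
    qed
    then show ?thesis by (simp only: norm2_sq power_mult_distrib) (simp add: power2_eq_square)
  qed
  then show ?thesis by (rule power2_le_imp_le) simp
qed



lemma psi_diff: "psi i p - psi i q = Tm i *v (p - q)"
  by (simp add: psi_def matrix_vector_mult_diff_distrib)

lemma psi_list_diff: "psi_list ws p - psi_list ws q = Dpsi_list ws *v (p - q)"
proof (induction ws)
  case Nil then show ?case by simp
next
  case (Cons i ws)
  then show ?case by (simp add: psi_diff matrix_vector_mul_assoc)
qed

lemma Dpsi_norm: "norm (Dpsi_list ws *v u) \<le> (3/5) ^ length ws * norm u"
proof (induction ws)
  case Nil then show ?case by simp
next
  case (Cons i ws)
  have "norm (Dpsi_list (i # ws) *v u) = norm (Tm i *v (Dpsi_list ws *v u))"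
    by (simp add: matrix_vector_mul_assoc)
  also have "\<dots> \<le> 3/5 * norm (Dpsi_list ws *v u)" by (rule Tm_norm)
  also have "\<dots> \<le> 3/5 * ((3/5) ^ length ws * norm u)"
    using Cons by (intro mult_left_mono) auto
  finally show ?case by simp
qed

lemma psi_list_append: "psi_list (ws @ [j]) = psi_list ws \<circ> psi j"
  by (induction ws) auto

lemma psi_affine: "a + b = 1 \<Longrightarrow> psi i (a *\<^sub>R x + b *\<^sub>R y) = a *\<^sub>R psi i x + b *\<^sub>R psi i y"
proof -
  assume h: "a + b = 1"
  have e: "fixpt i = a *\<^sub>R fixpt i + b *\<^sub>R fixpt i" using h by (metis scaleR_add_left scaleR_one)
  have "a *\<^sub>R x + b *\<^sub>R y - fixpt i = a *\<^sub>R (x - fixpt i) + b *\<^sub>R (y - fixpt i)"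
    by (subst e) (simp add: algebra_simps)
  then have "psi i (a *\<^sub>R x + b *\<^sub>R y) = (a *\<^sub>R fixpt i + b *\<^sub>R fixpt i) + (a *\<^sub>R (Tm i *v (x - fixpt i)) + b *\<^sub>R (Tm i *v (y - fixpt i)))"
    unfolding psi_def by (subst e) (simp add: matrix_vector_right_distrib matrix_vector_mult_scaleR)
  then show ?thesis unfolding psi_def by (simp add: algebra_simps)
qed

lemma tri_mem: "0 \<le> a \<Longrightarrow> 0 \<le> b \<Longrightarrow> 0 \<le> c \<Longrightarrow> a + b + c = 1 \<Longrightarrow>
   p = a *\<^sub>R pA + b *\<^sub>R pB + c *\<^sub>R pC \<Longrightarrow> p \<in> triangle"
  unfolding triangle_def convex_hull_3 by blast

lemma vtx_in: "pA \<in> triangle" "pB \<in> triangle" "pC \<in> triangle"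
  unfolding triangle_def by (auto intro: hull_inc)

lemma psi_comp: "psi i x $ k = fixpt i $ k + (Tm i *v (x - fixpt i)) $ k"
  by (simp add: psi_def)


lemma t1: "psi 1 pB = (2/5) *\<^sub>R pA + (2/5) *\<^sub>R pB + (1/5) *\<^sub>R pC"
 by (simp add: vec_eq_iff forall_2 psi_comp fixpt_def Tm_def Tm_apply pA_def pB_def pC_def; simp add: field_simps)
lemma t2: "psi 1 pC = (2/5) *\<^sub>R pA + (1/5) *\<^sub>R pB + (2/5) *\<^sub>R pC"
 by (simp add: vec_eq_iff forall_2 psi_comp fixpt_def Tm_def Tm_apply pA_def pB_def pC_def; simp add: field_simps)
lemma t3: "psi 2 pC = (1/5) *\<^sub>R pA + (2/5) *\<^sub>R pB + (2/5) *\<^sub>R pC"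
 by (simp add: vec_eq_iff forall_2 psi_comp fixpt_def Tm_def Tm_apply pA_def pB_def pC_def; simp add: field_simps)
lemma t0: "psi 2 pA = (2/5) *\<^sub>R pA + (2/5) *\<^sub>R pB + (1/5) *\<^sub>R pC"
 by (simp add: vec_eq_iff forall_2 psi_comp fixpt_def Tm_def Tm_apply pA_def pB_def pC_def; simp add: field_simps)
lemma t4: "psi 3 pA = (2/5) *\<^sub>R pA + (1/5) *\<^sub>R pB + (2/5) *\<^sub>R pC"
 by (simp add: vec_eq_iff forall_2 psi_comp fixpt_def Tm_def Tm_apply pA_def pB_def pC_def; simp add: field_simps)
lemma t5: "psi 3 pB = (1/5) *\<^sub>R pA + (2/5) *\<^sub>R pB + (2/5) *\<^sub>R pC"
 by (simp add: vec_eq_iff forall_2 psi_comp fixpt_def Tm_def Tm_apply pA_def pB_def pC_def; simp add: field_simps)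

lemma psi_other: "i \<noteq> 1 \<Longrightarrow> i \<noteq> 2 \<Longrightarrow> psi i = psi 3"
  by (simp add: fun_eq_iff psi_def Tm_def fixpt_def)

lemma psi_vertices: "psi i pA \<in> triangle \<and> psi i pB \<in> triangle \<and> psi i pC \<in> triangle"
proof -
  have f: "psi 1 pA = pA" "psi 2 pB = pB" "psi 3 pC = pC" by (simp_all add: psi_def fixpt_def)
  have m: "psi 1 pB \<in> triangle" "psi 1 pC \<in> triangle" "psi 2 pA \<in> triangle"
     "psi 2 pC \<in> triangle" "psi 3 pA \<in> triangle" "psi 3 pB \<in> triangle"
    apply (rule tri_mem[OF _ _ _ _ t1]; simp) apply (rule tri_mem[OF _ _ _ _ t2]; simp)
      apply (rule tri_mem[OF _ _ _ _ t0]; simp) apply (rule tri_mem[OF _ _ _ _ t3]; simp)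
      apply (rule tri_mem[OF _ _ _ _ t4]; simp) apply (rule tri_mem[OF _ _ _ _ t5]; simp)
    done
  have "psi j pA \<in> triangle \<and> psi j pB \<in> triangle \<and> psi j pC \<in> triangle" if "j \<in> {1,2,3}" for j
    using that f m vtx_in by auto
  moreover have "psi i = psi 1 \<or> psi i = psi 2 \<or> psi i = psi 3" using psi_other by metis
  ultimately show ?thesis by (metis insertI1 insertI2 singletonI)
qed



lemma psi_cont: "continuous_on S (psi i)"
  unfolding psi_def matrix_vector_mult_diff_distrib by (intro continuous_intros)

lemma psi_tri: "psi i ` triangle \<subseteq> triangle"
proof -
  have "convex {x. psi i x \<in> triangle}"
    unfolding convex_def
  proof (intro ballI allI impI, simp)
    fix x y :: pt and u v :: real
    assume "psi i x \<in> triangle" "psi i y \<in> triangle" "0 \<le> u" "0 \<le> v" "u + v = 1"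
    then show "psi i (u *\<^sub>R x + v *\<^sub>R y) \<in> triangle"
      using psi_affine[of u v i x y] convex_convex_hull[of "{pA,pB,pC}"]
      unfolding triangle_def convex_def by simp
  qed
  moreover have "{pA, pB, pC} \<subseteq> {x. psi i x \<in> triangle}" using psi_vertices by auto
  ultimately have "triangle \<subseteq> {x. psi i x \<in> triangle}"
    unfolding triangle_def by (rule hull_minimal[rotated])
  then show ?thesis by auto
qed

lemma psi_list_tri: "psi_list ws ` triangle \<subseteq> triangle"
proof (induction ws)
  case Nil then show ?case by simp
next
  case (Cons i ws)
  then show ?case using psi_tri[of i] by auto
qed

lemma compact_tri: "compact triangle"
  unfolding triangle_def by (rule finite_imp_compact_convex_hull) simp

definition invset :: "pt set \<Rightarrow> bool" where
  "invset S \<longleftrightarrow> S \<noteq> {} \<and> compact S \<and> S = (\<Union>i\<in>{1,2,3::nat}. psi i ` S)"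

lemma psi_all: "psi i = psi 1 \<or> psi i = psi 2 \<or> psi i = psi 3"
  using psi_other by metis

lemma invset_closed_psi: "invset S \<Longrightarrow> psi i ` S \<subseteq> S"
proof -
  assume "invset S"
  then have "psi j ` S \<subseteq> S" if "j \<in> {1,2,3}" for j using that unfolding invset_def by blast
  then show ?thesis using psi_all[of i] by (metis insertI1 insertI2 singletonI)
qed

lemma invset_psi_list: "invset S \<Longrightarrow> z \<in> S \<Longrightarrow> psi_list ws z \<in> S"
  by (induction ws) (auto dest: invset_closed_psi)

lemma invset_decomp: "invset S \<Longrightarrow> x \<in> S \<Longrightarrow> \<exists>ws y. length ws = n \<and> y \<in> S \<and> x = psi_list ws y"
proof (induction n)
  case 0 then show ?case by (intro exI[of _ "[]"]) auto
next
  case (Suc n)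
  then obtain ws y where h: "length ws = n" "y \<in> S" "x = psi_list ws y" by blast
  then have "y \<in> (\<Union>i\<in>{1,2,3::nat}. psi i ` S)" using Suc.prems unfolding invset_def by blast
  then obtain i y' where "y' \<in> S" "y = psi i y'" by blast
  then show ?case using h by (intro exI[of _ "ws @ [i]"] exI[of _ y']) (simp add: psi_list_append)
qed

lemma invset_sub: assumes "invset S1" "invset S2" shows "S1 \<subseteq> S2"
proof
  fix x assume x: "x \<in> S1"
  obtain z where z: "z \<in> S2" using assms(2) unfolding invset_def by blast
  have "bounded S1" "bounded S2" using assms unfolding invset_def by (auto intro: compact_imp_bounded)
  then obtain b1 b2 where b: "\<forall>y\<in>S1. norm y \<le> b1" "\<forall>y\<in>S2. norm y \<le> b2" "b1 > 0" "b2 > 0"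
    unfolding bounded_pos by blast
  have "x \<in> closure S2"
    unfolding closure_approachable
  proof (intro allI impI)
    fix e :: real assume e: "e > 0"
    obtain n where n: "(3/5::real) ^ n < e / (b1 + b2)" using real_arch_pow_inv[of "e / (b1+b2)" "3/5::real"] e b by auto
    obtain ws y where h: "length ws = n" "y \<in> S1" "x = psi_list ws y" using invset_decomp[OF assms(1) x] by blast
    have "dist (psi_list ws z) x = norm (Dpsi_list ws *v (z - y))"
      by (simp add: dist_norm h psi_list_diff)
    also have "\<dots> \<le> (3/5) ^ n * norm (z - y)" using Dpsi_norm[of ws "z - y"] h(1) by simp
    also have "\<dots> \<le> (3/5) ^ n * (b1 + b2)"
    proof -
      have "norm (z - y) \<le> norm z + norm y" by (rule norm_triangle_ineq4)
      also have "\<dots> \<le> b1 + b2" using bspec[OF b(1) h(2)] bspec[OF b(2) z] by linarith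
      finally have "norm (z - y) \<le> b1 + b2" .
      then show ?thesis by (intro mult_left_mono) auto
    qed
    also have "\<dots> < e" using n b by (simp add: field_simps)
    finally show "\<exists>y\<in>S2. dist y x < e" using invset_psi_list[OF assms(2) z] by blast
  qed
  then show "x \<in> S2" using assms(2) unfolding invset_def by (simp add: compact_imp_closed closure_closed)
qed

definition Xset :: "pt set" where
  "Xset = {psi_list ws P | ws P. P \<in> {pA, pB, pC}}"

lemma psi_Xset: "psi i ` Xset \<subseteq> Xset"
proof clarify
  fix x assume "x \<in> Xset"
  then obtain ws P where h: "x = psi_list ws P" "P \<in> {pA,pB,pC}" unfolding Xset_def by blast
  then have "psi i x = psi_list (i # ws) P" by simp
  then show "psi i x \<in> Xset" using h(2) unfolding Xset_def by blast
qed

lemma psi_img_sub: "psi i ` A \<subseteq> (\<Union>i\<in>{1,2,3::nat}. psi i ` A)"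
proof -
  consider "psi i = psi 1" | "psi i = psi 2" | "psi i = psi 3" using psi_all by blast
  then show ?thesis proof cases
    case 1 then show ?thesis by (metis UN_upper insertI1)
  next
    case 2 then show ?thesis by (metis UN_upper insertI1 insertI2)
  next
    case 3 then show ?thesis by (metis UN_upper insertI1 insertI2)
  qed
qed

lemma Xset_inv: "Xset = (\<Union>i\<in>{1,2,3::nat}. psi i ` Xset)"
proof
  show "Xset \<subseteq> (\<Union>i\<in>{1,2,3::nat}. psi i ` Xset)"
  proof
    fix x assume "x \<in> Xset"
    then obtain ws P where h: "x = psi_list ws P" "P \<in> {pA,pB,pC}" unfolding Xset_def by blast
    have PX: "P \<in> Xset" using h(2) unfolding Xset_def by (metis (mono_tags, lifting) id_apply mem_Collect_eq psi_list.simps(1))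
    have "\<exists>i. x \<in> psi i ` Xset"
    proof (cases ws)
      case Nil
      then have xP: "x = P" using h by simp
      have "P = psi 1 P \<or> P = psi 2 P \<or> P = psi 3 P" using h(2) by (auto simp: psi_def fixpt_def)
      then show ?thesis using xP PX by blast
    next
      case (Cons i ws')
      have "psi_list ws' P \<in> Xset" using h(2) unfolding Xset_def by blast
      then have "x \<in> psi i ` Xset" using h Cons by (simp add: image_eqI)
      then show ?thesis by blast
    qed
    then show "x \<in> (\<Union>i\<in>{1,2,3::nat}. psi i ` Xset)" using psi_img_sub by blast
  qed
next
  show "(\<Union>i\<in>{1,2,3::nat}. psi i ` Xset) \<subseteq> Xset"
    using psi_Xset by blast
qed

lemma Xset_tri: "Xset \<subseteq> triangle"
proof clarify
  fix x assume "x \<in> Xset"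
  then obtain ws P where h: "x = psi_list ws P" "P \<in> {pA,pB,pC}" unfolding Xset_def by blast
  then have "P \<in> triangle" using vtx_in by blast
  then have "psi_list ws P \<in> psi_list ws ` triangle" by (rule imageI)
  then show "x \<in> triangle" using psi_list_tri h(1) by blast
qed

lemma pA_X: "pA \<in> Xset"
proof -
  have "psi_list [] pA \<in> Xset" unfolding Xset_def by blast
  then show ?thesis by simp
qed

lemma invset_K: "invset (closure Xset)"
proof -
  have ne: "closure Xset \<noteq> {}" using pA_X closure_subset by blast
  have cpt: "compact (closure Xset)"
    using Xset_tri compact_tri by (meson bounded_subset compact_closure compact_imp_bounded)
  have sub1: "psi i ` closure Xset \<subseteq> closure Xset" for i
    by (rule image_closure_subset[OF psi_cont closed_closure]) (rule subset_trans[OF psi_Xset closure_subset])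
  have A: "(\<Union>i\<in>{1,2,3::nat}. psi i ` closure Xset) \<subseteq> closure Xset"
    using sub1 by (simp add: UN_least)
  have B: "closure Xset \<subseteq> (\<Union>i\<in>{1,2,3::nat}. psi i ` closure Xset)"
  proof (rule closure_minimal)
    show "Xset \<subseteq> (\<Union>i\<in>{1,2,3::nat}. psi i ` closure Xset)"
      by (rule subset_trans[OF equalityD1[OF Xset_inv]]) (intro UN_mono image_mono closure_subset order_refl)
    show "closed (\<Union>i\<in>{1,2,3::nat}. psi i ` closure Xset)"
      by (intro closed_UN finite.intros ballI compact_imp_closed compact_continuous_image psi_cont cpt)
  qed
  show ?thesis unfolding invset_def
    by (intro conjI ne cpt subset_antisym A B)
qed

lemma HSG_eq: "HSG = closure Xset"
  unfolding HSG_def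
proof (rule the_equality)
  show "closure Xset \<noteq> {} \<and> compact (closure Xset) \<and> closure Xset = (\<Union>i\<in>{1,2,3::nat}. psi i ` closure Xset)"
    using invset_K unfolding invset_def by (elim conjE) (intro conjI)
  fix S assume "S \<noteq> {} \<and> compact S \<and> S = (\<Union>i\<in>{1,2,3::nat}. psi i ` S)"
  then have "invset S" unfolding invset_def by (elim conjE) (intro conjI)
  then show "S = closure Xset" using invset_K invset_sub subset_antisym by metis
qed

lemma vertex_HSG: "P \<in> {pA, pB, pC} \<Longrightarrow> psi_list ws P \<in> HSG"
proof -
  assume "P \<in> {pA, pB, pC}"
  then have "psi_list ws P \<in> Xset" unfolding Xset_def by blast
  then show ?thesis unfolding HSG_eq using closure_subset by blast
qed



lemma tri_bound: "\<exists>Dt>0. \<forall>p\<in>triangle. \<forall>q\<in>triangle. norm (p - q) \<le> Dt"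
proof -
  obtain b where b: "b > 0" "\<forall>x\<in>triangle. norm x \<le> b"
    using compact_imp_bounded[OF compact_tri] unfolding bounded_pos by blast
  have "norm (p - q) \<le> 2 * b" if "p \<in> triangle" "q \<in> triangle" for p q
  proof -
    have "norm (p - q) \<le> norm p + norm q" by (rule norm_triangle_ineq4)
    then show ?thesis using bspec[OF b(2) that(1)] bspec[OF b(2) that(2)] by linarith
  qed
  then show ?thesis using b by (intro exI[of _ "2*b"]) auto
qed

lemma cell_dist: "norm (psi_list ws p - psi_list ws q) \<le> (3/5) ^ length ws * norm (p - q)"
  using Dpsi_norm[of ws "p - q"] by (simp add: psi_list_diff)

lemma psi_list_affine: "psi_list ws x = psi_list ws 0 + Dpsi_list ws *v x"
  using psi_list_diff[of ws x 0] by (simp add: algebra_simps)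

lemma psi_list_cont: "continuous_on S (psi_list ws)"
proof -
  have "continuous_on S (\<lambda>x. psi_list ws 0 + Dpsi_list ws *v x)" by (intro continuous_intros)
  then show ?thesis by (subst (asm) psi_list_affine[symmetric])
qed

lemma map_upt_Suc: "map w [0..<Suc n] = map w [0..<n] @ [w n]"
  by simp

lemma cell_dec: "psi_list (map w [0..<Suc n]) ` triangle \<subseteq> psi_list (map w [0..<n]) ` triangle"
proof -
  have "psi_list (map w [0..<Suc n]) ` triangle = psi_list (map w [0..<n]) ` (psi (w n) ` triangle)"
    by (simp add: psi_list_append image_comp)
  also have "\<dots> \<subseteq> psi_list (map w [0..<n]) ` triangle" using psi_tri by (intro image_mono)
  finally show ?thesis .
qed

lemma Phi_in: "Phi w \<in> psi_list (map w [0..<l]) ` triangle"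
proof -
  define S where "S n = psi_list (map w [0..<Suc n]) ` triangle" for n
  obtain Dt where Dt: "Dt > 0" "\<forall>p\<in>triangle. \<forall>q\<in>triangle. norm (p - q) \<le> Dt" using tri_bound by blast
  have "\<exists>a. \<Inter>(range S) = {a}"
  proof (rule decreasing_closed_nest_sing)
    show "closed (S n)" for n unfolding S_def
      by (intro compact_imp_closed compact_continuous_image psi_list_cont compact_tri)
    show "S n \<noteq> {}" for n unfolding S_def using vtx_in by blast
    show "S n \<subseteq> S m" if "m \<le> n" for m n
      using that
    proof (induction n rule: dec_induct)
      case base then show ?case by simp
    next
      case (step n) then show ?case unfolding S_def using cell_dec[of w "Suc n"] by blast
    qed
    show "\<exists>n. \<forall>x\<in>S n. \<forall>y\<in>S n. dist x y < e" if e: "e > 0" for e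
    proof -
      obtain n where n: "(3/5::real) ^ n < e / Dt" using real_arch_pow_inv[of "e / Dt" "3/5::real"] e Dt by auto
      have "dist x y < e" if "x \<in> S n" "y \<in> S n" for x y
      proof -
        obtain p q where pq: "p \<in> triangle" "q \<in> triangle" "x = psi_list (map w [0..<Suc n]) p"
          "y = psi_list (map w [0..<Suc n]) q" using \<open>x \<in> S n\<close> \<open>y \<in> S n\<close> unfolding S_def by blast
        have "dist x y \<le> (3/5) ^ Suc n * norm (p - q)" using cell_dist[of "map w [0..<Suc n]" p q] pq(3,4) by (simp only: dist_norm length_map length_upt) simp
        also have "\<dots> \<le> (3/5) ^ Suc n * Dt" using Dt pq by (intro mult_left_mono) auto
        also have "\<dots> \<le> (3/5) ^ n * Dt" using Dt by (intro mult_right_mono) (auto simp: power_decreasing)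
        also have "\<dots> < e" using n Dt by (simp add: field_simps)
        finally show ?thesis .
      qed
      then show ?thesis by blast
    qed
  qed
  then obtain a where a: "\<Inter>(range S) = {a}" by blast
  have "Phi w = a" unfolding Phi_def
  proof (rule the_equality)
    show "a \<in> (\<Inter>l. psi_list (map w [0..<Suc l]) ` triangle)" using a unfolding S_def by blast
    fix x assume "x \<in> (\<Inter>l. psi_list (map w [0..<Suc l]) ` triangle)"
    then have "x \<in> \<Inter>(range S)" unfolding S_def by blast
    then show "x = a" using a by blast
  qed
  then have "Phi w \<in> S l" using a by blast
  then show ?thesis unfolding S_def using cell_dec[of w l] by blast
qed



lemma HS2: "HS_sq D = (D$1$1)^2 + (D$1$2)^2 + (D$2$1)^2 + (D$2$2)^2"
  by (simp add: HS_sq_def trace_def transpose_def mat_mult2 sum_2 power2_eq_square)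

lemma DDt: "((D::mat2) ** transpose D) $ i $ j = D$i$1 * D$j$1 + D$i$2 * D$j$2"
  by (simp add: mat_mult2 transpose_def)

lemma cs2: "(r + s * t)^2 \<le> (r^2 + s^2) * (1 + t^2)" for r s t :: real
proof -
  have "(r^2 + s^2) * (1 + t^2) - (r + s * t)^2 = (r * t - s)^2" by (simp add: power2_eq_square algebra_simps)
  then show ?thesis by (metis diff_ge_0_iff_ge zero_le_power2)
qed

lemma pick_e: fixes a b c d :: real
  shows "(a + b * t)^2 + (c + d * t)^2 + ((a - b * t)^2 + (c - d * t)^2) = 2 * (a^2 + c^2) + 2 * t^2 * (b^2 + d^2)"
  by (simp add: power2_eq_square algebra_simps)

lemma dir_est:
  fixes D :: "nat \<Rightarrow> mat2" and v w :: pt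
  assumes conv: "(\<lambda>l. (1 / HS_sq (D l)) *\<^sub>R (D l ** transpose (D l))) \<longlonglongrightarrow> projm v"
    and nv: "norm v = 1" and w: "w$1 = - v$2" "w$2 = v$1" and ep: "\<epsilon> > 0"
  shows "eventually (\<lambda>l. \<exists>e\<in>{pB - pA, pC - pA}. D l *v e \<noteq> 0 \<and>
            (w \<bullet> (D l *v e))^2 \<le> \<epsilon> * (norm (D l *v e))^2) sequentially"
proof -
  define M where "M l = (1 / HS_sq (D l)) *\<^sub>R (D l ** transpose (D l))" for l
  have Mij: "(\<lambda>l. M l $ i $ j) \<longlonglongrightarrow> v$i * v$j" for i j
    using tendsto_vec_nth[OF tendsto_vec_nth[OF conv[folded M_def]], of i j] by (simp add: projm_def)
  define Q where "Q l = (w$1)^2 * M l$1$1 + w$1 * w$2 * M l$1$2 + w$2 * w$1 * M l$2$1 + (w$2)^2 * M l$2$2" for l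
  have "Q \<longlonglongrightarrow> (w$1)^2 * (v$1 * v$1) + w$1 * w$2 * (v$1 * v$2) + w$2 * w$1 * (v$2 * v$1) + (w$2)^2 * (v$2 * v$2)"
    unfolding Q_def by (intro tendsto_intros Mij)
  also have "(w$1)^2 * (v$1 * v$1) + w$1 * w$2 * (v$1 * v$2) + w$2 * w$1 * (v$2 * v$1) + (w$2)^2 * (v$2 * v$2) = 0"
    using w by (simp add: power2_eq_square algebra_simps)
  finally have Qlim: "Q \<longlonglongrightarrow> 0" .
  have "(\<lambda>l. M l$1$1 + M l$2$2) \<longlonglongrightarrow> v$1 * v$1 + v$2 * v$2" by (intro tendsto_intros Mij)
  moreover have "v$1 * v$1 + v$2 * v$2 = 1" using nv norm2_sq[of v] by (simp add: power2_eq_square)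
  ultimately have Tlim: "(\<lambda>l. M l$1$1 + M l$2$2) \<longlonglongrightarrow> 1" by simp
  have ev1: "eventually (\<lambda>l. Q l < \<epsilon> / 4) sequentially"
    using order_tendstoD(2)[OF Qlim, of "\<epsilon>/4"] ep by simp
  have ev2: "eventually (\<lambda>l. M l$1$1 + M l$2$2 > 1/2) sequentially"
    using order_tendstoD(1)[OF Tlim, of "1/2"] by simp
  show ?thesis
    using ev1 ev2
  proof eventually_elim
    case (elim l)
    define h where "h = HS_sq (D l)"
    define a where "a = D l$1$1" define b where "b = D l$1$2"
    define c where "c = D l$2$1" define d where "d = D l$2$2"
    have h2: "h = a^2 + b^2 + c^2 + d^2" unfolding h_def a_def b_def c_def d_def by (rule HS2)
    have Mform: "M l $ i $ j = (D l$i$1 * D l$j$1 + D l$i$2 * D l$j$2) / h" for i j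
      unfolding M_def h_def by (simp add: DDt)
    have hne: "h \<noteq> 0"
    proof
      assume "h = 0" then show False using elim(2) by (simp add: Mform)
    qed
    have hpos: "h > 0" using hne h2 by (metis add_nonneg_nonneg le_less zero_le_power2)
    define r where "r = w$1 * a + w$2 * c"
    define s where "s = w$1 * b + w$2 * d"
    have Qh: "Q l * h = r^2 + s^2"
      unfolding Q_def Mform r_def s_def a_def b_def c_def d_def using hne
      by (simp add: field_simps power2_eq_square)
    have rs: "r^2 + s^2 < \<epsilon> / 4 * h" using Qh elim(1) hpos by (metis mult_strict_right_mono)
    define t :: real where "t = 1 / sqrt 3"
    have t2: "t^2 = 1/3" unfolding t_def by (simp add: power_divide)
    have eB: "pB - pA = vector [1, t]" and eC: "pC - pA = vector [1, - t]"
      unfolding t_def pA_def pB_def pC_def by (simp_all add: vec_eq_iff forall_2)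
    have DeB: "D l *v (pB - pA) = vector [a + b * t, c + d * t]"
      unfolding eB a_def b_def c_def d_def by (simp add: vec_eq_iff forall_2 mv2)
    have DeC: "D l *v (pC - pA) = vector [a - b * t, c - d * t]"
      unfolding eC a_def b_def c_def d_def by (simp add: vec_eq_iff forall_2 mv2)
    have nB: "(norm (D l *v (pB - pA)))^2 = (a + b * t)^2 + (c + d * t)^2" by (simp add: DeB norm2_sq)
    have nC: "(norm (D l *v (pC - pA)))^2 = (a - b * t)^2 + (c - d * t)^2" by (simp add: DeC norm2_sq)
    have wB: "w \<bullet> (D l *v (pB - pA)) = r + s * t" unfolding DeB by (simp add: inner2 r_def s_def algebra_simps)
    have wC: "w \<bullet> (D l *v (pC - pA)) = r + s * (- t)" unfolding DeC by (simp add: inner2 r_def s_def algebra_simps)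
    have sum: "(norm (D l *v (pB - pA)))^2 + (norm (D l *v (pC - pA)))^2 \<ge> 2/3 * h"
    proof -
      have "(norm (D l *v (pB - pA)))^2 + (norm (D l *v (pC - pA)))^2 = 2 * (a^2 + c^2) + 2 * t^2 * (b^2 + d^2)"
        using nB nC pick_e by simp
      moreover have "2 * (a^2 + c^2) \<ge> 2/3 * (a^2 + c^2)" by simp
      ultimately show ?thesis using t2 h2 by (simp add: algebra_simps)
    qed
    have key: "(r + s * \<tau>)^2 < \<epsilon> / 3 * h" if "\<tau>^2 = 1/3" for \<tau>
    proof -
      have "(r + s * \<tau>)^2 \<le> (r^2 + s^2) * (1 + \<tau>^2)" by (rule cs2)
      also have "\<dots> = (r^2 + s^2) * (4/3)"
      proof -
        have "1 + \<tau>^2 = 4/3" using that by simp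
        then show ?thesis by (simp only:)
      qed
      also have "\<dots> < \<epsilon> / 4 * h * (4/3)" using rs by simp
      finally show ?thesis by simp
    qed
    show ?case
    proof (cases "(norm (D l *v (pB - pA)))^2 \<ge> h / 3")
      case True
      have "(w \<bullet> (D l *v (pB - pA)))^2 \<le> \<epsilon> * (norm (D l *v (pB - pA)))^2"
      proof -
        have "(w \<bullet> (D l *v (pB - pA)))^2 < \<epsilon> / 3 * h" using key[of t] t2 wB by simp
        also have "\<dots> \<le> \<epsilon> * (norm (D l *v (pB - pA)))^2" using True ep by simp
        finally show ?thesis by simp
      qed
      moreover have "D l *v (pB - pA) \<noteq> 0" using True hpos by auto
      ultimately show ?thesis by blast
    next
      case False
      then have C: "(norm (D l *v (pC - pA)))^2 \<ge> h / 3" using sum by simp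
      have "(w \<bullet> (D l *v (pC - pA)))^2 \<le> \<epsilon> * (norm (D l *v (pC - pA)))^2"
      proof -
        have "(w \<bullet> (D l *v (pC - pA)))^2 < \<epsilon> / 3 * h" using key[of "-t"] t2 wC by simp
        also have "\<dots> \<le> \<epsilon> * (norm (D l *v (pC - pA)))^2" using C ep by simp
        finally show ?thesis by simp
      qed
      moreover have "D l *v (pC - pA) \<noteq> 0" using C hpos by auto
      ultimately show ?thesis by blast
    qed
  qed
qed



lemma grad_apply:
  assumes "(f has_derivative blinfun_apply F) (at x)"
  shows "blinfun_apply F u = grad f x \<bullet> u"
proof -
  have fd: "frechet_derivative f (at x) = blinfun_apply F" using frechet_derivative_at[OF assms] by simp
  have u: "u = u$1 *\<^sub>R axis 1 1 + u$2 *\<^sub>R axis 2 1"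
    by (simp add: vec_eq_iff forall_2 axis_def)
  have "blinfun_apply F u = u$1 * blinfun_apply F (axis 1 1) + u$2 * blinfun_apply F (axis 2 1)"
    by (subst u) (simp add: blinfun.add_right blinfun.scaleR_right)
  then show ?thesis by (simp add: grad_def fd inner2)
qed

lemma strict_diff:
  assumes der: "\<And>p. (f has_derivative blinfun_apply (F p)) (at p)" and cont: "continuous_on UNIV F"
    and eta: "\<eta> > 0"
  shows "\<exists>\<delta>>0. \<forall>y\<in>ball x \<delta>. \<forall>z\<in>ball x \<delta>. \<bar>f y - f z - grad f x \<bullet> (y - z)\<bar> \<le> \<eta> * norm (y - z)"
proof -
  have "isCont F x" using cont by (simp add: continuous_on_eq_continuous_at)
  then have "\<forall>e>0. \<exists>d>0. \<forall>p. p \<noteq> x \<and> dist p x < d \<longrightarrow> dist (F p) (F x) < e"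
    unfolding isCont_def tendsto_iff eventually_at by simp
  then obtain \<delta> where d0: "\<delta> > 0" "\<forall>p. p \<noteq> x \<and> dist p x < \<delta> \<longrightarrow> dist (F p) (F x) < \<eta>"
    using eta by blast
  have d: "\<delta> > 0" "\<forall>p. dist p x < \<delta> \<longrightarrow> dist (F p) (F x) < \<eta>"
    using d0 eta by (metis dist_self)+
  have "\<bar>f y - f z - grad f x \<bullet> (y - z)\<bar> \<le> \<eta> * norm (y - z)" if yz: "y \<in> ball x \<delta>" "z \<in> ball x \<delta>" for y z
  proof -
    have "norm (f y - f z - blinfun_apply (F x) (y - z)) \<le> norm (y - z) * \<eta>"
    proof (rule differentiable_bound_linearization[where S="ball x \<delta>" and f' = "\<lambda>p. blinfun_apply (F p)"])
      show "z + t *\<^sub>R (y - z) \<in> ball x \<delta>" if "t \<in> {0..1}" for t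
      proof -
        have "z + t *\<^sub>R (y - z) = (1 - t) *\<^sub>R z + t *\<^sub>R y" by (simp add: algebra_simps)
        then show ?thesis using convex_ball[of x \<delta>] yz that unfolding convex_def by auto
      qed
      show "(f has_derivative blinfun_apply (F p)) (at p within ball x \<delta>)" if "p \<in> ball x \<delta>" for p
        using der has_derivative_at_withinI by blast
      show "onorm (blinfun_apply (F p) - blinfun_apply (F x)) \<le> \<eta>" if "p \<in> ball x \<delta>" for p
      proof -
        have "blinfun_apply (F p) - blinfun_apply (F x) = blinfun_apply (F p - F x)"
          by (simp add: fun_eq_iff blinfun.diff_left)
        then have "onorm (blinfun_apply (F p) - blinfun_apply (F x)) = norm (F p - F x)"
          by (simp add: norm_blinfun.rep_eq)
        also have "\<dots> < \<eta>" using d that by (simp add: dist_commute) (simp add: dist_norm)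
        finally show ?thesis by simp
      qed
      show "x \<in> ball x \<delta>" using d by simp
    qed
    then show ?thesis using grad_apply[OF der[of x]] by (simp add: mult.commute)
  qed
  then show ?thesis using d by blast
qed



lemma lim_mono_ge:
  fixes G :: "real \<Rightarrow> ereal"
  assumes mono: "\<And>r r'. 0 < r \<Longrightarrow> r \<le> r' \<Longrightarrow> G r \<le> G r'"
    and lb: "\<And>r. 0 < r \<Longrightarrow> c \<le> G r"
  shows "c \<le> Lim (at_right (0::real)) G"
proof -
  define I where "I = (INF r\<in>{0<..}. G r)"
  have "(G \<longlongrightarrow> I) (at_right 0)"
  proof (rule order_tendstoI)
    fix a assume "a < I"
    then have "a < G r" if "r > 0" for r using less_INF_D[of a G "{0<..}" r] that unfolding I_def by simp
    then show "eventually (\<lambda>r. a < G r) (at_right 0)"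
      unfolding eventually_at_right_field by (intro exI[of _ 1]) auto
  next
    fix a assume "I < a"
    then obtain r0 where r0: "r0 > 0" "G r0 < a" unfolding I_def INF_less_iff by auto
    have "G r < a" if "0 < r" "r < r0" for r using mono[of r r0] that r0 by auto
    then show "eventually (\<lambda>r. G r < a) (at_right 0)"
      unfolding eventually_at_right_field using r0 by (intro exI[of _ r0]) auto
  qed
  then have "Lim (at_right 0) G = I" by (intro tendsto_Lim) simp_all
  moreover have "c \<le> I" unfolding I_def using lb by (auto intro: INF_greatest)
  ultimately show ?thesis by simp
qed

lemma dir_bound:
  fixes V W u g :: pt
  assumes nV: "norm V = 1" and W: "W$1 = - V$2" "W$2 = V$1" and nu: "norm u = 1"
    and b: "(W \<bullet> u)^2 \<le> \<sigma>^2" and s: "0 \<le> \<sigma>"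
  shows "\<bar>g \<bullet> u\<bar> \<ge> \<bar>g \<bullet> V\<bar> - \<sigma> * (\<bar>g \<bullet> V\<bar> + \<bar>g \<bullet> W\<bar>)"
proof -
  have V1: "(V$1)^2 + (V$2)^2 = 1" using nV norm2_sq[of V] by simp
  have u1: "(u$1)^2 + (u$2)^2 = 1" using nu norm2_sq[of u] by simp
  define a where "a = V \<bullet> u"
  define bb where "bb = W \<bullet> u"
  have gu: "g \<bullet> u = (g \<bullet> V) * a + (g \<bullet> W) * bb"
  proof -
    have "(g \<bullet> V) * a + (g \<bullet> W) * bb = (g$1 * u$1 + g$2 * u$2) * ((V$1)^2 + (V$2)^2)"
      unfolding a_def bb_def inner2 W by (simp add: algebra_simps power2_eq_square)
    then show ?thesis using V1 by (simp add: inner2)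
  qed
  have ab: "a^2 + bb^2 = 1"
  proof -
    have "a^2 + bb^2 = ((V$1)^2 + (V$2)^2) * ((u$1)^2 + (u$2)^2)"
      unfolding a_def bb_def inner2 W by (simp add: algebra_simps power2_eq_square)
    then show ?thesis using V1 u1 by simp
  qed
  have bs: "\<bar>bb\<bar> \<le> \<sigma>" using b s unfolding bb_def by (metis abs_ge_zero power2_abs power2_le_imp_le)
  have "bb^2 \<le> 1" using ab by (metis le_add_same_cancel2 zero_le_power2)
  then have b1: "\<bar>bb\<bar> \<le> 1" by (simp add: abs_square_le_1)
  have a1: "\<bar>a\<bar> \<ge> 1 - \<bar>bb\<bar>"
  proof -
    have "(1 - \<bar>bb\<bar>)^2 \<le> a^2"
    proof -
      have "(1 - \<bar>bb\<bar>)^2 = 1 - 2 * \<bar>bb\<bar> + bb^2" by (simp add: power2_eq_square algebra_simps)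
      also have "\<dots> \<le> 1 - bb^2"
      proof -
        have "bb^2 = \<bar>bb\<bar> * \<bar>bb\<bar>" by (simp add: power2_eq_square)
        also have "\<dots> \<le> \<bar>bb\<bar> * 1" using b1 by (intro mult_left_mono) auto
        finally show ?thesis by simp
      qed
      finally show ?thesis using ab by simp
    qed
    then have "(1 - \<bar>bb\<bar>)^2 \<le> \<bar>a\<bar>^2" by simp
    then show ?thesis by (rule power2_le_imp_le) simp
  qed
  have "\<bar>g \<bullet> u\<bar> \<ge> \<bar>g \<bullet> V\<bar> * \<bar>a\<bar> - \<bar>g \<bullet> W\<bar> * \<bar>bb\<bar>"
  proof -
    have t: "\<bar>p + q\<bar> \<ge> \<bar>p\<bar> - \<bar>q\<bar>" for p q :: real by arith
    show ?thesis unfolding gu using t[of "(g \<bullet> V) * a" "(g \<bullet> W) * bb"] by (simp add: abs_mult)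
  qed
  moreover have "\<bar>g \<bullet> V\<bar> * \<bar>a\<bar> \<ge> \<bar>g \<bullet> V\<bar> * (1 - \<sigma>)" using a1 bs by (intro mult_left_mono) auto
  moreover have "\<bar>g \<bullet> W\<bar> * \<bar>bb\<bar> \<le> \<bar>g \<bullet> W\<bar> * \<sigma>" using bs by (intro mult_left_mono) auto
  ultimately show ?thesis by (simp add: algebra_simps)
qed

lemma projm_norm: "norm V = 1 \<Longrightarrow> norm (projm V *v g) = \<bar>V \<bullet> g\<bar>"
proof -
  assume "norm V = 1"
  have "projm V *v g = (V \<bullet> g) *\<^sub>R V"
    by (simp add: vec_eq_iff forall_2 mv2 projm_def inner2 algebra_simps)
  then show ?thesis using \<open>norm V = 1\<close> by simp
qed



theorem lemma4p5:
  fixes v :: "real^2 \<Rightarrow> real^2"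
  assumes "kusuoka_field v"
  shows "\<forall>f. C1 f \<longrightarrow> (\<forall>x\<in>S_hat v. Lip_a f x \<ge> ereal (norm (projm (v x) *v grad f x)))"
proof (intro allI impI ballI)
  fix f x assume C1: "C1 f" and xS: "x \<in> S_hat v"
  obtain F where der: "\<And>p. (f has_derivative blinfun_apply (F p)) (at p)" and cont: "continuous_on UNIV F"
    using C1 unfolding C1_def by blast
  obtain w where w: "w \<in> Sigma3" "x = Phi w" and conv: "(\<lambda>l. (1 / HS_sq (Dpsi_list (map w [0..<l]))) *\<^sub>R
            (Dpsi_list (map w [0..<l]) ** transpose (Dpsi_list (map w [0..<l])))) \<longlonglongrightarrow> projm (v x)"
    using xS unfolding S_hat_def S_tilde_def by blast
  obtain Dt where Dt: "Dt > 0" "\<forall>p\<in>triangle. \<forall>q\<in>triangle. norm (p - q) \<le> Dt" using tri_bound by blast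
  have close: "dist (psi_list (map w [0..<l]) P) x \<le> (3/5)^l * Dt" if "P \<in> {pA,pB,pC}" for P l
  proof -
    obtain q where q: "q \<in> triangle" "x = psi_list (map w [0..<l]) q" using Phi_in[of w l] w(2) by blast
    have "dist (psi_list (map w [0..<l]) P) x \<le> (3/5)^l * norm (P - q)"
      using cell_dist[of "map w [0..<l]" P q] q(2) by (simp add: dist_norm)
    also have "\<dots> \<le> (3/5)^l * Dt" using Dt q(1) that vtx_in by (intro mult_left_mono) auto
    finally show ?thesis .
  qed
  have small: "eventually (\<lambda>l. (3/5::real)^l * Dt < \<rho>) sequentially" if "\<rho> > 0" for \<rho>
  proof -
    have "(\<lambda>l. (3/5::real)^l * Dt) \<longlonglongrightarrow> 0 * Dt" by (intro tendsto_intros) simp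
    then show ?thesis using order_tendstoD(2) that by fastforce
  qed
  have xH: "x \<in> HSG"
  proof -
    have "x \<in> closure HSG" unfolding closure_approachable
    proof (intro allI impI)
      fix e :: real assume e: "e > 0"
      from small[OF e] obtain N where N: "\<forall>n\<ge>N. (3/5::real)^n * Dt < e" by (auto simp: eventually_sequentially)
      have "dist (psi_list (map w [0..<N]) pA) x < e" using close[of pA N] N by force
      then show "\<exists>y\<in>HSG. dist y x < e" using vertex_HSG[of pA "map w [0..<N]"] by blast
    qed
    then show ?thesis unfolding HSG_eq by simp
  qed
  define V where "V = v x"
  have nV: "norm V = 1" using assms xH unfolding kusuoka_field_def V_def by blast
  define W :: pt where "W = vector [- V$2, V$1]"
  have W: "W$1 = - V$2" "W$2 = V$1" by (simp_all add: W_def)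
  define g where "g = grad f x"
  define L where "L = \<bar>g \<bullet> V\<bar>"
  have Leq: "norm (projm (v x) *v grad f x) = L"
    using projm_norm[OF nV] by (simp add: L_def V_def g_def inner_commute)
  define Gr where "Gr = (\<lambda>r. SUP (y, z) \<in> {(y, z). y \<noteq> z \<and> y \<in> HSG \<inter> ball x r \<and> z \<in> HSG \<inter> ball x r}.
        ereal (\<bar>f y - f z\<bar> / norm (y - z)))"
  define D where "D l = Dpsi_list (map w [0..<l])" for l
  have core: "\<exists>y z. y \<noteq> z \<and> y \<in> HSG \<inter> ball x r \<and> z \<in> HSG \<inter> ball x r \<and> c < \<bar>f y - f z\<bar> / norm (y - z)"
    if r: "r > 0" and c: "c < L" for r c
  proof -
    define \<eta> where "\<eta> = L - c"
    have \<eta>: "\<eta> > 0" using c by (simp add: \<eta>_def)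
    obtain \<delta> where \<delta>: "\<delta> > 0" "\<forall>y\<in>ball x \<delta>. \<forall>z\<in>ball x \<delta>. \<bar>f y - f z - grad f x \<bullet> (y - z)\<bar> \<le> \<eta>/3 * norm (y - z)"
      using strict_diff[OF der cont, of "\<eta>/3" x] \<eta> by auto
    define \<sigma> where "\<sigma> = (\<eta>/3) / (L + \<bar>g \<bullet> W\<bar> + 1)"
    have pos: "L + \<bar>g \<bullet> W\<bar> + 1 > 0" unfolding L_def by (simp add: add_nonneg_pos)
    have \<sigma>0: "\<sigma> > 0" using \<eta> pos by (simp add: \<sigma>_def)
    have \<sigma>1: "\<sigma> * (L + \<bar>g \<bullet> W\<bar>) \<le> \<eta>/3"
    proof -
      have "\<sigma> * (L + \<bar>g \<bullet> W\<bar>) \<le> \<sigma> * (L + \<bar>g \<bullet> W\<bar> + 1)" using \<sigma>0 by simp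
      also have "\<dots> = \<eta>/3" unfolding \<sigma>_def using pos by (metis nonzero_eq_divide_eq order_less_irrefl)
      finally show ?thesis .
    qed
    have ev1: "eventually (\<lambda>l. \<exists>e\<in>{pB - pA, pC - pA}. D l *v e \<noteq> 0 \<and>
            (W \<bullet> (D l *v e))^2 \<le> \<sigma>^2 * (norm (D l *v e))^2) sequentially"
      using dir_est[of D V W "\<sigma>^2"] conv nV W \<sigma>0 unfolding D_def V_def by simp
    have ev2: "eventually (\<lambda>l. (3/5::real)^l * Dt < min r \<delta>) sequentially"
      using small[of "min r \<delta>"] r \<delta>(1) by simp
    obtain l where l1: "\<exists>e\<in>{pB - pA, pC - pA}. D l *v e \<noteq> 0 \<and> (W \<bullet> (D l *v e))^2 \<le> \<sigma>^2 * (norm (D l *v e))^2"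
      and l2: "(3/5::real)^l * Dt < min r \<delta>"
      using eventually_happens'[OF sequentially_bot eventually_conj[OF ev1 ev2]] by blast
    then obtain P where P: "P \<in> {pB, pC}" "D l *v (P - pA) \<noteq> 0"
        "(W \<bullet> (D l *v (P - pA)))^2 \<le> \<sigma>^2 * (norm (D l *v (P - pA)))^2" by blast
    define y where "y = psi_list (map w [0..<l]) P"
    define z where "z = psi_list (map w [0..<l]) pA"
    have yz: "y - z = D l *v (P - pA)" unfolding y_def z_def D_def by (rule psi_list_diff)
    have yne: "y \<noteq> z" using yz P(2) by auto
    have nyz: "norm (y - z) > 0" using yne by simp
    have yH: "y \<in> HSG" unfolding y_def using P(1) by (intro vertex_HSG) auto
    have zH: "z \<in> HSG" unfolding z_def by (intro vertex_HSG) auto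
    have dy: "dist y x < min r \<delta>" using close[of P l] P(1) l2 unfolding y_def by force
    have dz: "dist z x < min r \<delta>" using close[of pA l] l2 unfolding z_def by force
    have yb: "y \<in> ball x r" "y \<in> ball x \<delta>" using dy by (auto simp: dist_commute)
    have zb: "z \<in> ball x r" "z \<in> ball x \<delta>" using dz by (auto simp: dist_commute)
    define u where "u = (1 / norm (y - z)) *\<^sub>R (y - z)"
    have nu: "norm u = 1" using nyz by (simp add: u_def)
    have Wu: "(W \<bullet> u)^2 \<le> \<sigma>^2"
    proof -
      have "(W \<bullet> u)^2 = (W \<bullet> (y - z))^2 / (norm (y - z))^2"
        by (simp add: u_def power_divide)
      also have "\<dots> \<le> \<sigma>^2" using P(3) nyz by (simp add: yz divide_le_eq)
      finally show ?thesis .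
    qed
    have gu: "\<bar>g \<bullet> u\<bar> \<ge> L - \<eta>/3"
    proof -
      have "\<bar>g \<bullet> u\<bar> \<ge> \<bar>g \<bullet> V\<bar> - \<sigma> * (\<bar>g \<bullet> V\<bar> + \<bar>g \<bullet> W\<bar>)"
        by (rule dir_bound[OF nV W nu Wu]) (use \<sigma>0 in simp)
      then show ?thesis using \<sigma>1 unfolding L_def by simp
    qed
    have guyz: "\<bar>g \<bullet> (y - z)\<bar> = norm (y - z) * \<bar>g \<bullet> u\<bar>"
      using nyz by (simp add: u_def abs_mult)
    have fd: "\<bar>f y - f z\<bar> \<ge> \<bar>g \<bullet> (y - z)\<bar> - \<eta>/3 * norm (y - z)"
    proof -
      have "\<bar>f y - f z - grad f x \<bullet> (y - z)\<bar> \<le> \<eta>/3 * norm (y - z)" using \<delta>(2) yb(2) zb(2) by blast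
      then show ?thesis unfolding g_def by linarith
    qed
    have "\<bar>f y - f z\<bar> / norm (y - z) \<ge> \<bar>g \<bullet> u\<bar> - \<eta>/3"
    proof -
      have "\<bar>f y - f z\<bar> \<ge> norm (y - z) * (\<bar>g \<bullet> u\<bar> - \<eta>/3)" using fd guyz by (simp add: algebra_simps)
      then show ?thesis using nyz by (simp add: le_divide_eq mult.commute)
    qed
    then have "\<bar>f y - f z\<bar> / norm (y - z) > c" using gu \<eta> \<eta>_def by linarith
    then show ?thesis using yne yH zH yb zb by blast
  qed
  have lb: "ereal L \<le> Gr r" if rpos: "r > 0" for r
  proof (rule ccontr)
    assume "\<not> ereal L \<le> Gr r"
    then have "Gr r < ereal L" by simp
    then obtain c where c: "Gr r < ereal c" "ereal c < ereal L" using ereal_dense2 by blast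
    then obtain y z where yz: "y \<noteq> z" "y \<in> HSG \<inter> ball x r" "z \<in> HSG \<inter> ball x r" "c < \<bar>f y - f z\<bar> / norm (y - z)"
      using core[OF rpos, of c] c(2) by auto
    have "ereal (\<bar>f y - f z\<bar> / norm (y - z)) \<le> Gr r"
      unfolding Gr_def using yz by (intro SUP_upper2[of "(y, z)"]) auto
    moreover have "ereal c < ereal (\<bar>f y - f z\<bar> / norm (y - z))" using yz(4) by simp
    ultimately show False using c(1) by (meson order_less_trans order_less_le_trans less_irrefl)
  qed
  have mono: "Gr r \<le> Gr r'" if "0 < r" "r \<le> r'" for r r'
    unfolding Gr_def by (rule SUP_subset_mono) (use that in auto)
  have "ereal L \<le> Lim (at_right 0) Gr" by (rule lim_mono_ge[OF mono lb])
  moreover have "Lip_a f x = Lim (at_right 0) Gr" unfolding Lip_a_def Gr_def by simp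
  ultimately show "Lip_a f x \<ge> ereal (norm (projm (v x) *v grad f x))" using Leq by simp
qed

end
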